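(* Let $a$ be a positive, locally integrable, monotonically increasing function on $\mathbb{R}_+$, and let $\hat a(x):=x/a(x)$, $x\in\mathbb{R}_+$. Assume that $\hat a$ is also monotonically increasing on $\mathbb{R}_+$. Let $q\in L^1(\mathbb{R}_+)$ be complex-valued and let $e_+(x,z)$ be its Jost solution. Then for all $x\in\mathbb{R}_+$ and all $z\in\mathbb{C}_+^0:=\{z\in\mathbb{C}:\operatorname{Im}z\ge0,\ z\ne0\}$, $$|e^{-izx}e_+(x,z)-1|\le \exp\bigl(\omega_a(x,z)\bigr)-1,\qquad \omega_a(x,z):=\hat a\!\left(\frac1{|z|}\right)\int_x^\infty a(t)|q(t)|\,dt$$ (the right-hand side being possibly $+\infty$).
   Context: For a complex-valued $q\in L^1(\mathbb{R}_+)$ and $z\in\mathbb{C}_+^0$, the Jost solution $e_+(\cdot,z)$ is the unique solution of $-y''+q(x)y=z^2y$ on $\mathbb{R}_+$ with $e_+(x,z)=e^{ixz}(1+o(1))$ as $x\to\infty$ (equivalently, the solution of the integral equation $e_+(x,z)=e^{ixz}+\int_x^\infty\frac{\sin((t-x)z)}{z}q(t)e_+(t,z)\,dt$). *)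

theory Defs
  imports "HOL-Analysis.Analysis"
begin

text \<open>Here R_+ is read as the closed half-line [0, infinity).\<close>

definition jost_kernel :: "complex \<Rightarrow> real \<Rightarrow> real \<Rightarrow> complex" where
  "jost_kernel z x t = sin ((complex_of_real t - complex_of_real x) * z) / z"

text \<open>e is the Jost solution of -y'' + q y = z^2 y on [0,infinity):
  the (unique) continuous solution of the integral equation
  e(x) = exp(i x z) + int_x^infinity sin((t-x)z)/z q(t) e(t) dt
  with e(x) = exp(i x z)(1 + o(1)) as x tends to infinity.\<close>
definition jost_solution :: "(real \<Rightarrow> complex) \<Rightarrow> complex \<Rightarrow> (real \<Rightarrow> complex) \<Rightarrow> bool" where
  "jost_solution q z e \<longleftrightarrow>
     continuous_on {0..} e \<and>
     (\<forall>x\<ge>0. (\<lambda>t. jost_kernel z x t * q t * e t) integrable_on {x..} \<and>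
             e x = exp (\<i> * complex_of_real x * z)
                   + integral {x..} (\<lambda>t. jost_kernel z x t * q t * e t)) \<and>
     ((\<lambda>x. exp (- \<i> * complex_of_real x * z) * e x) \<longlongrightarrow> 1) at_top"

definition ahat :: "(real \<Rightarrow> real) \<Rightarrow> real \<Rightarrow> real" where
  "ahat a x = x / a x"

end

theory Submission
  imports Defs
begin


lemma split_Ici:
  fixes f :: "real \<Rightarrow> real"
  assumes "f integrable_on {t..s}" "f integrable_on {s..}" "t \<le> s"
  shows "integral {t..} f = integral {t..s} f + integral {s..} f"
proof -
  have "(f has_integral (integral {t..s} f + integral {s..} f)) ({t..s} \<union> {s..})"
    apply (rule has_integral_Un)
    using assms by (auto simp: integrable_integral)
  moreover have "{t..s} \<union> {s..} = {t..}" using assms(3) by auto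
  ultimately show ?thesis by (simp add: integral_unique)
qed

lemma integrable_sub_lebesgue:
  fixes f :: "real \<Rightarrow> real"
  assumes f: "f integrable_on {x..}" and nn: "\<And>t. t \<ge> x \<Longrightarrow> f t \<ge> 0"
    and A: "A \<in> sets lebesgue" "A \<subseteq> {x..}"
  shows "f integrable_on A"
proof -
  have "f absolutely_integrable_on {x..}"
    using f nn by (intro nonnegative_absolutely_integrable_1) auto
  then have "f absolutely_integrable_on A"
    using A by (rule set_integrable_subset)
  then show ?thesis by (rule set_lebesgue_integral_eq_integral(1))
qed

lemma prod_integrable:
  fixes \<phi> v :: "real \<Rightarrow> real"
  assumes phi_nn: "\<And>t. t \<ge> x \<Longrightarrow> \<phi> t \<ge> 0"
    and phi_int: "\<phi> integrable_on {x..}"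
    and v_nn: "\<And>t. t \<ge> x \<Longrightarrow> v t \<ge> 0"
    and v_cont: "continuous_on {x..} v"
    and v_bdd: "\<And>t. t \<ge> x \<Longrightarrow> v t \<le> M"
    and t: "t \<ge> x"
  shows "(\<lambda>r. \<phi> r * (1 + v r)) integrable_on {t..}"
proof -
  define g where "g r = \<phi> r * (1 + v r)" for r
  have g_nn: "g t \<ge> 0" if "t \<ge> x" for t using phi_nn[OF that] v_nn[OF that] by (simp add: g_def)
  have g_int: "g integrable_on {x..}"
  proof (rule measurable_bounded_by_integrable_imp_integrable_real[where g="\<lambda>r. (1+M) * \<phi> r"])
    have "\<phi> \<in> borel_measurable (lebesgue_on {x..})" using phi_int by (rule integrable_imp_measurable)
    moreover have "v \<in> borel_measurable (lebesgue_on {x..})"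
      using v_cont by (rule continuous_imp_measurable_on_sets_lebesgue) auto
    ultimately show "g \<in> borel_measurable (lebesgue_on {x..})" unfolding g_def by measurable
    show "(\<lambda>r. (1+M) * \<phi> r) integrable_on {x..}" using phi_int by (intro integrable_on_mult_right)
    show "\<bar>g r\<bar> \<le> (1+M) * \<phi> r" if "r \<in> {x..}" for r
      using that g_nn[of r] phi_nn[of r] v_bdd[of r] unfolding g_def
      by (auto intro!: mult_left_mono simp: mult.commute)
    show "{x..} \<in> sets lebesgue" by simp
  qed
  have "g integrable_on {t..}" using integrable_sub_lebesgue[OF g_int g_nn] t by auto
  then show ?thesis by (simp add: g_def[abs_def])
qed

lemma gronwall_tail:
  fixes \<phi> v :: "real \<Rightarrow> real"
  assumes phi_nn: "\<And>t. t \<ge> x \<Longrightarrow> \<phi> t \<ge> 0"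
    and phi_int: "\<phi> integrable_on {x..}"
    and v_nn: "\<And>t. t \<ge> x \<Longrightarrow> v t \<ge> 0"
    and v_cont: "continuous_on {x..} v"
    and v_bdd: "\<And>t. t \<ge> x \<Longrightarrow> v t \<le> M"
    and v_le: "\<And>t. t \<ge> x \<Longrightarrow> v t \<le> integral {t..} (\<lambda>r. \<phi> r * (1 + v r))"
  shows "v x \<le> exp (integral {x..} \<phi>) - 1"
proof -
  define g where "g r = \<phi> r * (1 + v r)" for r
  define S where "S t = integral {t..} g" for t
  define \<Phi> where "\<Phi> t = integral {t..} \<phi>" for t
  have g_nn: "g t \<ge> 0" if "t \<ge> x" for t using phi_nn[OF that] v_nn[OF that] by (simp add: g_def)
  have M0: "M \<ge> 0" using v_nn[of x] v_bdd[of x] by simp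
  have g_int: "g integrable_on {x..}"
  proof (rule measurable_bounded_by_integrable_imp_integrable_real[where g="\<lambda>r. (1+M) * \<phi> r"])
    have "\<phi> \<in> borel_measurable (lebesgue_on {x..})" using phi_int by (rule integrable_imp_measurable)
    moreover have "v \<in> borel_measurable (lebesgue_on {x..})"
      using v_cont by (rule continuous_imp_measurable_on_sets_lebesgue) auto
    ultimately show "g \<in> borel_measurable (lebesgue_on {x..})" unfolding g_def by measurable
    show "(\<lambda>r. (1+M) * \<phi> r) integrable_on {x..}" using phi_int by (intro integrable_on_mult_right)
    show "\<bar>g r\<bar> \<le> (1+M) * \<phi> r" if "r \<in> {x..}" for r
      using that g_nn[of r] phi_nn[of r] v_bdd[of r] unfolding g_def
      by (auto intro!: mult_left_mono simp: mult.commute)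
    show "{x..} \<in> sets lebesgue" by simp
  qed
  have phiA: "\<phi> integrable_on A" and gA: "g integrable_on A" if "A \<in> sets lebesgue" "A \<subseteq> {x..}" for A
    using integrable_sub_lebesgue[OF phi_int phi_nn that] integrable_sub_lebesgue[OF g_int g_nn that] by auto
  have phiI: "\<phi> integrable_on {t..}" "\<phi> integrable_on {t..s}" 
    and gI: "g integrable_on {t..}" "g integrable_on {t..s}" if "t \<ge> x" for t s
    using phiA[of "{t..}"] phiA[of "{t..s}"] gA[of "{t..}"] gA[of "{t..s}"] that by auto
  have Phi_split: "\<Phi> t = integral {t..s} \<phi> + \<Phi> s" and S_split: "S t = integral {t..s} g + S s"
    if "x \<le> t" "t \<le> s" for t s
    unfolding \<Phi>_def S_def using that
    by (auto intro!: split_Ici phiI gI)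
  have S_nn: "S t \<ge> 0" if "t \<ge> x" for t
    unfolding S_def using that by (intro integral_nonneg gI) (auto intro: g_nn)
  have Phi_nn: "\<Phi> t \<ge> 0" if "t \<ge> x" for t
    unfolding \<Phi>_def using that by (intro integral_nonneg phiI) (auto intro: phi_nn)
  have S_anti: "S s \<le> S t" if "x \<le> t" "t \<le> s" for t s
  proof -
    have "integral {t..s} g \<ge> 0" using that by (intro integral_nonneg gI) (auto intro: g_nn)
    then show ?thesis using S_split[OF that] by simp
  qed
  have g_le: "g r \<le> (1 + S t) * \<phi> r" if "x \<le> t" "t \<le> r" for t r
  proof -
    have "integral {r..} (\<lambda>r. \<phi> r * (1 + v r)) = S r" by (simp add: S_def g_def[abs_def])
    then have "v r \<le> S t" using v_le[of r] S_anti[of t r] that by simp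
    then show ?thesis unfolding g_def using phi_nn[of r] that
      by (simp add: mult.commute mult_left_mono)
  qed
  have key1: "S t \<le> (1 + S t) * (\<Phi> t - \<Phi> s) + S s" if "x \<le> t" "t \<le> s" for t s
  proof -
    have "integral {t..s} g \<le> integral {t..s} (\<lambda>r. (1 + S t) * \<phi> r)"
      using that by (intro integral_le gI integrable_on_mult_right phiI) (auto intro: g_le)
    also have "\<dots> = (1 + S t) * (\<Phi> t - \<Phi> s)" using Phi_split[OF that] by simp
    finally show ?thesis using S_split[OF that] by simp
  qed
  have key0: "S t \<le> (1 + S t) * \<Phi> t" if "x \<le> t" for t
  proof -
    have "integral {t..} g \<le> integral {t..} (\<lambda>r. (1 + S t) * \<phi> r)"
      using that by (intro integral_le gI integrable_on_mult_right phiI) (auto intro: g_le)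
    then show ?thesis by (simp add: S_def \<Phi>_def)
  qed
  have tail: "\<exists>b\<ge>t. \<Phi> b < \<epsilon>" if xt: "x \<le> t" and ep: "\<epsilon> > 0" for t \<epsilon>
  proof -
    let ?f = "\<lambda>k r. if r \<in> {..real k} then \<phi> r else 0"
    have lim: "(\<lambda>k. integral {t..} (?f k)) \<longlonglongrightarrow> integral {t..} \<phi>"
    proof (rule dominated_convergence(2)[where h=\<phi>])
      show "?f k integrable_on {t..}" for k
        unfolding integrable_restrict_Int using xt by (intro phiA) auto
      show "\<phi> integrable_on {t..}" using xt by (rule phiI)
      show "norm (?f k r) \<le> \<phi> r" if "r \<in> {t..}" for k r
        using that xt phi_nn[of r] by auto
      show "(\<lambda>k. ?f k r) \<longlonglongrightarrow> \<phi> r" if "r \<in> {t..}" for r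
      proof (rule tendsto_eventually)
        obtain n where "r \<le> real n" using real_arch_simple by blast
        then show "\<forall>\<^sub>F k in sequentially. ?f k r = \<phi> r"
          by (intro eventually_sequentiallyI[of n]) (auto intro: order_trans)
      qed
    qed
    then have "\<forall>\<^sub>F k in sequentially. integral {t..} (?f k) > \<Phi> t - \<epsilon>"
      unfolding \<Phi>_def using ep by (intro order_tendstoD(1)) auto
    moreover obtain n where n: "t \<le> real n" using real_arch_simple by blast
    then have "\<forall>\<^sub>F k in sequentially. t \<le> real k"
      by (intro eventually_sequentiallyI[of n]) (auto intro: order_trans)
    ultimately have "\<forall>\<^sub>F k in sequentially. integral {t..} (?f k) > \<Phi> t - \<epsilon> \<and> t \<le> real k"
      by eventually_elim auto
    then obtain k where k: "integral {t..} (?f k) > \<Phi> t - \<epsilon>" "t \<le> real k"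
      using eventually_sequentially by auto
    have "integral {t..} (?f k) = integral ({..real k} \<inter> {t..}) \<phi>" by (rule integral_restrict_Int)
    also have "{..real k} \<inter> {t..} = {t..real k}" by auto
    also have "integral {t..real k} \<phi> = \<Phi> t - \<Phi> (real k)" using Phi_split[of t "real k"] xt k(2) by simp
    finally show ?thesis using k by auto
  qed
  have Phi_cont: "continuous_on {t..b} \<Phi>" if "x \<le> t" for t b
  proof -
    have c: "continuous_on {t..b} (\<lambda>r. \<Phi> t - integral {t..r} \<phi>)"
      using that by (intro continuous_intros indefinite_integral_continuous_1 phiI)
    have e: "\<Phi> t - integral {t..r} \<phi> = \<Phi> r" if "r \<in> {t..b}" for r
    proof -
      have "\<Phi> t = integral {t..r} \<phi> + \<Phi> r" using Phi_split[of t r] that \<open>x \<le> t\<close> by simp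
      then show ?thesis by linarith
    qed
    show ?thesis by (rule continuous_on_eq[OF c e])
  qed
  have main: "\<forall>t\<ge>x. \<Phi> t \<le> real k * \<delta> \<longrightarrow> 1 + S t \<le> (1 / (1 - \<delta>)) ^ k"
    if d: "0 < \<delta>" "\<delta> < 1" for \<delta> k
  proof (induction k)
    case 0
    show ?case
    proof (intro allI impI)
      fix t assume t: "t \<ge> x" "\<Phi> t \<le> real 0 * \<delta>"
      have "(1 + S t) * \<Phi> t \<le> 0" using t S_nn[of t] by (intro mult_nonneg_nonpos) auto
      then show "1 + S t \<le> (1 / (1 - \<delta>)) ^ 0" using key0[of t] t by simp
    qed
  next
    case (Suc k)
    define Q where "Q = 1 / (1 - \<delta>)"
    have Q1: "Q \<ge> 1" using d by (simp add: Q_def)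
    have Qk: "Q ^ k \<le> Q ^ Suc k" using Q1 by (simp add: power_increasing)
    have lem: "1 + S t \<le> Q ^ Suc k" if "(1 + S t) * (1 - \<delta>) \<le> Q ^ k" for t
    proof -
      have "1 + S t \<le> Q ^ k / (1 - \<delta>)" using that d by (simp add: pos_le_divide_eq)
      also have "\<dots> = Q ^ Suc k" by (simp add: Q_def field_simps)
      finally show ?thesis .
    qed
    show ?case
    proof (intro allI impI)
      fix t assume t: "t \<ge> x" "\<Phi> t \<le> real (Suc k) * \<delta>"
      show "1 + S t \<le> (1 / (1 - \<delta>)) ^ Suc k"
        unfolding Q_def[symmetric]
      proof (cases "\<Phi> t \<le> real k * \<delta>")
        case True
        then show "1 + S t \<le> Q ^ Suc k" using Suc.IH t Qk unfolding Q_def by auto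
      next
        case False
        show "1 + S t \<le> Q ^ Suc k"
        proof (cases "k = 0")
          case True
          have "(1 + S t) * \<Phi> t \<le> (1 + S t) * \<delta>"
            using t True S_nn[of t] by (intro mult_left_mono) auto
          then have "S t \<le> (1 + S t) * \<delta>"
            using key0[of t] t by linarith
          then have "(1 + S t) * (1 - \<delta>) \<le> Q ^ k" using True by (simp add: algebra_simps)
          then show ?thesis by (rule lem)
        next
          case k0: False
          have kd: "real k * \<delta> > 0" using k0 d by simp
          obtain b where b: "b \<ge> t" "\<Phi> b < real k * \<delta>" using tail[OF t(1) kd] by blast
          obtain s where s: "t \<le> s" "s \<le> b" "\<Phi> s = real k * \<delta>"
            using IVT2'[of \<Phi> b "real k * \<delta>" t] b False Phi_cont[OF t(1), of b] by auto
          have xs: "x \<le> s" using s t by simp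
          have IHs: "1 + S s \<le> Q ^ k" using Suc.IH xs s(3) unfolding Q_def by auto
          have "\<Phi> t - \<Phi> s \<le> \<delta>" using s(3) t(2) by (simp add: algebra_simps)
          then have "(1 + S t) * (\<Phi> t - \<Phi> s) \<le> (1 + S t) * \<delta>"
            using S_nn[of t] t by (intro mult_left_mono) auto
          then have "S t \<le> (1 + S t) * \<delta> + S s" using key1[OF t(1) s(1)] by simp
          then have "(1 + S t) * (1 - \<delta>) \<le> Q ^ k" using IHs by (simp add: algebra_simps)
          then show ?thesis by (rule lem)
        qed
      qed
    qed
  qed
  have vS: "v x \<le> S x" using v_le[of x] by (simp add: S_def g_def[abs_def])
  have "1 + S x \<le> exp (\<Phi> x)"
  proof (cases "\<Phi> x = 0")
    case True
    then show ?thesis using key0[of x] by simp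
  next
    case False
    then have P: "\<Phi> x > 0" using Phi_nn[of x] by simp
    have lim: "(\<lambda>n. inverse ((1 + (- \<Phi> x) / real n) ^ n)) \<longlonglongrightarrow> inverse (exp (- \<Phi> x))"
      by (intro tendsto_inverse tendsto_exp_limit_sequentially) simp
    obtain N :: nat where N: "\<Phi> x < real N" using reals_Archimedean2 by blast
    have "1 + S x \<le> inverse (exp (- \<Phi> x))"
    proof (rule LIMSEQ_le_const[OF lim], intro exI allI impI)
      fix n assume n: "N \<le> n"
      then have nP: "\<Phi> x < real n" using N by linarith
      then have n0: "real n > 0" using P by linarith
      define \<delta> where "\<delta> = \<Phi> x / real n"
      have d: "0 < \<delta>" "\<delta> < 1" using P nP n0 by (auto simp: \<delta>_def field_simps)
      have "\<Phi> x \<le> real n * \<delta>" using n0 by (simp add: \<delta>_def)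
      then have "1 + S x \<le> (1 / (1 - \<delta>)) ^ n" using main[OF d, of n] by simp
      also have "\<dots> = inverse ((1 + (- \<Phi> x) / real n) ^ n)"
        by (simp add: \<delta>_def power_one_over inverse_eq_divide)
      finally show "1 + S x \<le> inverse ((1 + (- \<Phi> x) / real n) ^ n)" .
    qed
    then show ?thesis by (simp add: exp_minus)
  qed
  then show ?thesis using vS by (simp add: \<Phi>_def)
qed



lemma kernel_bound:
  assumes z: "Im z \<ge> 0" "z \<noteq> 0" and xt: "x0 \<le> t"
  shows "cmod (exp (- \<i> * complex_of_real x0 * z) * jost_kernel z x0 t * exp (\<i> * complex_of_real t * z))
         \<le> min (t - x0) (1 / cmod z)"
proof -
  define w where "w = t - x0"
  have w0: "w \<ge> 0" using xt by (simp add: w_def)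
  define u where "u = exp (\<i> * complex_of_real w * z)"
  define \<zeta> where "\<zeta> = 2 * \<i> * complex_of_real w * z"
  have u0: "u \<noteq> 0" by (simp add: u_def)
  have zz: "\<zeta> = \<i> * complex_of_real w * z + \<i> * complex_of_real w * z" by (simp add: \<zeta>_def)
  have uu: "exp \<zeta> = u * u" by (simp only: zz u_def mult_exp_exp)
  have e1: "exp (- \<i> * complex_of_real x0 * z) * exp (\<i> * complex_of_real t * z) = u"
    unfolding u_def w_def by (simp add: mult_exp_exp algebra_simps)
  have k: "jost_kernel z x0 t = (u - inverse u) / (2 * \<i>) / z"
  proof -
    have "complex_of_real t - complex_of_real x0 = complex_of_real w" by (simp add: w_def)
    then show ?thesis unfolding jost_kernel_def sin_exp_eq u_def
      by (simp only: exp_minus mult.assoc)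
  qed
  have eq: "exp (- \<i> * complex_of_real x0 * z) * jost_kernel z x0 t * exp (\<i> * complex_of_real t * z)
      = (exp \<zeta> - 1) / (2 * \<i> * z)"
  proof -
    have "exp (- \<i> * complex_of_real x0 * z) * jost_kernel z x0 t * exp (\<i> * complex_of_real t * z)
        = u * jost_kernel z x0 t" using e1 by (simp add: algebra_simps)
    also have "\<dots> = (exp \<zeta> - 1) / (2 * \<i> * z)" using u0 z(2) unfolding k uu
      by (simp add: field_simps)
    finally show ?thesis .
  qed
  have Re\<zeta>: "Re \<zeta> \<le> 0" using w0 z(1) by (simp add: \<zeta>_def)
  have b2: "cmod (exp \<zeta> - 1) \<le> 2"
  proof -
    have "cmod (exp \<zeta> - 1) \<le> cmod (exp \<zeta>) + cmod 1" by (rule norm_triangle_ineq4)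
    also have "cmod (exp \<zeta>) \<le> 1" using Re\<zeta> by simp
    finally show ?thesis by simp
  qed
  have b1: "cmod (exp \<zeta> - 1) \<le> cmod \<zeta>"
  proof -
    have "norm (exp \<zeta> - exp 0) \<le> 1 * norm (\<zeta> - 0)"
    proof (rule field_differentiable_bound[where S="{s. Re s \<le> 0}" and f'=exp])
      show "convex {s. Re s \<le> 0}" by (rule convex_halfspace_Re_le)
      show "(exp has_field_derivative exp s) (at s within {s. Re s \<le> 0})" for s
        by (rule has_field_derivative_at_within[OF DERIV_exp])
      show "norm (exp s) \<le> 1" if "s \<in> {s. Re s \<le> 0}" for s using that by simp
    qed (use Re\<zeta> in auto)
    then show ?thesis by simp
  qed
  have nz: "cmod \<zeta> = 2 * w * cmod z" using w0 by (simp add: \<zeta>_def norm_mult)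
  have zp: "cmod z > 0" using z(2) by simp
  have n: "cmod ((exp \<zeta> - 1) / (2 * \<i> * z)) = cmod (exp \<zeta> - 1) / (2 * cmod z)"
    by (simp add: norm_divide norm_mult)
  have "cmod (exp \<zeta> - 1) / (2 * cmod z) \<le> w"
    using b1 nz zp by (simp add: divide_le_eq mult.commute mult.left_commute)
  moreover have "cmod (exp \<zeta> - 1) / (2 * cmod z) \<le> 1 / cmod z"
    using b2 zp by (simp add: divide_le_eq)
  ultimately show ?thesis unfolding eq n w_def by simp
qed

lemma min_le_ahat:
  fixes a :: "real \<Rightarrow> real"
  assumes a_pos: "\<forall>t\<ge>0. a t > 0"
    and a_mono: "mono_on {0..} a"
    and ahat_mono: "mono_on {0..} (ahat a)"
    and c: "c > 0" and w: "0 \<le> w" "w \<le> t"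
  shows "min w c \<le> ahat a c * a t"
proof -
  have t0: "t \<ge> 0" using w by simp
  have ac: "a c > 0" "a t > 0" using a_pos c t0 by auto
  show ?thesis
  proof (cases "c \<le> t")
    case True
    have "a c \<le> a t" using mono_onD[OF a_mono, of c t] True c by auto
    then have "c \<le> c / a c * a t" using ac c by (simp add: field_simps)
    then show ?thesis by (simp add: ahat_def)
  next
    case False
    show ?thesis
    proof (cases "t = 0")
      case True
      then show ?thesis using w ac c by (simp add: ahat_def)
    next
      case False
      have "ahat a t \<le> ahat a c" using mono_onD[OF ahat_mono, of t c] \<open>\<not> c \<le> t\<close> t0 by auto
      then have "t / a t \<le> c / a c" by (simp add: ahat_def)
      then have "t \<le> c / a c * a t" using ac by (simp add: divide_le_eq)
      then show ?thesis using w by (simp add: ahat_def)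
    qed
  qed
qed



lemma exp_cancel: "exp (- \<i> * complex_of_real s * z) * exp (\<i> * complex_of_real s * z) = 1"
  by (subst mult_exp_exp) simp

theorem proposition1p2:
  fixes a :: "real \<Rightarrow> real" and q e :: "real \<Rightarrow> complex" and z :: complex and x :: real
  assumes a_pos: "\<forall>t\<ge>0. a t > 0"
    and a_locint: "\<forall>b\<ge>0. a integrable_on {0..b}"
    and a_mono: "mono_on {0..} a"
    and ahat_mono: "mono_on {0..} (ahat a)"
    and q_L1: "q absolutely_integrable_on {0..}"
    and z_in: "Im z \<ge> 0" "z \<noteq> 0"
    and jost: "jost_solution q z e"
    and x_nonneg: "x \<ge> 0"
    and finite_rhs: "(\<lambda>t. a t * cmod (q t)) integrable_on {x..}"
  shows "cmod (exp (- \<i> * complex_of_real x * z) * e x - 1)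
           \<le> exp (ahat a (1 / cmod z) * integral {x..} (\<lambda>t. a t * cmod (q t))) - 1"
proof -
  define c where "c = ahat a (1 / cmod z)"
  have zp: "cmod z > 0" using z_in(2) by simp
  have c0: "c > 0" using a_pos zp by (simp add: c_def ahat_def)
  define \<phi> where "\<phi> r = c * (a r * cmod (q r))" for r
  define y where "y t = exp (- \<i> * complex_of_real t * z) * e t" for t
  define v where "v t = cmod (y t - 1)" for t
  have e_cont: "continuous_on {0..} e"
    and e_eq: "\<And>t. t \<ge> 0 \<Longrightarrow> (\<lambda>r. jost_kernel z t r * q r * e r) integrable_on {t..} \<and>
             e t = exp (\<i> * complex_of_real t * z) + integral {t..} (\<lambda>r. jost_kernel z t r * q r * e r)"
    and lim: "(y \<longlongrightarrow> 1) at_top"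
    using jost unfolding jost_solution_def y_def[abs_def] by auto
  have phi_nn: "\<phi> t \<ge> 0" if "t \<ge> x" for t
  proof -
    have "a t > 0" using a_pos that x_nonneg by auto
    then show ?thesis unfolding \<phi>_def using c0 by simp
  qed
  have phi_int: "\<phi> integrable_on {x..}"
    unfolding \<phi>_def[abs_def] using finite_rhs by (rule integrable_on_mult_right)
  have v_nn: "v t \<ge> 0" for t by (simp add: v_def)
  have v_cont: "continuous_on {x..} v"
  proof -
    have "continuous_on {x..} e" using x_nonneg by (intro continuous_on_subset[OF e_cont]) auto
    then show ?thesis unfolding v_def[abs_def] y_def[abs_def] by (intro continuous_intros)
  qed
  obtain M where v_bdd: "\<And>t. t \<ge> x \<Longrightarrow> v t \<le> M"
  proof -
    have "\<forall>\<^sub>F t in at_top. dist (y t) 1 < 1" using tendstoD[OF lim, of 1] by simp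
    then obtain B where B: "\<And>t. t \<ge> B \<Longrightarrow> dist (y t) 1 < 1" by (auto simp: eventually_at_top_linorder)
    have "compact (v ` {x..max x B})"
      by (rule compact_continuous_image[OF continuous_on_subset[OF v_cont]]) auto
    then have "bounded (v ` {x..max x B})" by (rule compact_imp_bounded)
    then obtain m where m: "\<And>s. s \<in> v ` {x..max x B} \<Longrightarrow> \<bar>s\<bar> \<le> m" unfolding bounded_real by blast
    have "v t \<le> max m 1" if "t \<ge> x" for t
    proof (cases "t \<le> max x B")
      case True
      then have "\<bar>v t\<bar> \<le> m" using m that by auto
      then show ?thesis by simp
    next
      case False
      then have "dist (y t) 1 < 1" using B by simp
      then show ?thesis by (simp add: v_def dist_norm)
    qed
    then show ?thesis using that by blast
  qed
  have v_le: "v t \<le> integral {t..} (\<lambda>r. \<phi> r * (1 + v r))" if xt: "t \<ge> x" for t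
  proof -
    have t0: "t \<ge> 0" using xt x_nonneg by simp
    define F where "F r = jost_kernel z t r * q r * e r" for r
    have Fint: "F integrable_on {t..}" and et: "e t = exp (\<i> * complex_of_real t * z) + integral {t..} F"
      using e_eq[OF t0] by (auto simp: F_def[abs_def])
    have "y t - 1 = exp (- \<i> * complex_of_real t * z) * integral {t..} F"
      unfolding y_def et by (simp add: distrib_left exp_minus)
    also have "\<dots> = integral {t..} (\<lambda>r. exp (- \<i> * complex_of_real t * z) * F r)" by simp
    finally have yt: "y t - 1 = integral {t..} (\<lambda>r. exp (- \<i> * complex_of_real t * z) * F r)" .
    have "cmod (integral {t..} (\<lambda>r. exp (- \<i> * complex_of_real t * z) * F r))
        \<le> integral {t..} (\<lambda>r. \<phi> r * (1 + v r))"
    proof (rule integral_norm_bound_integral)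
      show "(\<lambda>r. exp (- \<i> * complex_of_real t * z) * F r) integrable_on {t..}"
        using Fint by (rule integrable_on_mult_right)
      show "(\<lambda>r. \<phi> r * (1 + v r)) integrable_on {t..}"
        using phi_nn phi_int v_nn v_cont v_bdd xt by (rule prod_integrable)
      fix r assume r: "r \<in> {t..}"
      have er: "e r = exp (\<i> * complex_of_real r * z) * y r"
      proof -
        have "exp (\<i> * complex_of_real r * z) * exp (- \<i> * complex_of_real r * z) = 1"
          by (subst mult_exp_exp) simp
        then show ?thesis unfolding y_def by (simp only: mult.assoc[symmetric] mult_1)
      qed
      have "exp (- \<i> * complex_of_real t * z) * F r
          = (exp (- \<i> * complex_of_real t * z) * jost_kernel z t r * exp (\<i> * complex_of_real r * z)) * q r * y r"
        unfolding F_def er by (simp add: algebra_simps)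
      then have "cmod (exp (- \<i> * complex_of_real t * z) * F r)
          = cmod (exp (- \<i> * complex_of_real t * z) * jost_kernel z t r * exp (\<i> * complex_of_real r * z)) * cmod (q r) * cmod (y r)"
        by (simp add: norm_mult)
      also have "\<dots> \<le> (c * a r) * cmod (q r) * (1 + v r)"
      proof -
        have "cmod (exp (- \<i> * complex_of_real t * z) * jost_kernel z t r * exp (\<i> * complex_of_real r * z))
            \<le> min (r - t) (1 / cmod z)" using kernel_bound[OF z_in] r by auto
        also have "\<dots> \<le> c * a r" unfolding c_def
          using min_le_ahat[OF a_pos a_mono ahat_mono, of "1 / cmod z" "r - t" r] zp r t0 by auto
        finally have k1: "cmod (exp (- \<i> * complex_of_real t * z) * jost_kernel z t r * exp (\<i> * complex_of_real r * z)) \<le> c * a r" .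
        have "cmod (y r) = cmod ((y r - 1) + 1)" by simp
        also have "\<dots> \<le> cmod (y r - 1) + cmod (1::complex)" by (rule norm_triangle_ineq)
        finally have k2: "cmod (y r) \<le> 1 + v r" by (simp add: v_def)
        have "a r > 0" using a_pos r t0 by auto
        then have k3: "0 \<le> c * a r" using c0 by simp
        have "cmod (exp (- \<i> * complex_of_real t * z) * jost_kernel z t r * exp (\<i> * complex_of_real r * z)) * cmod (q r)
            \<le> c * a r * cmod (q r)" using k1 by (rule mult_right_mono) simp
        then show ?thesis by (rule mult_mono[OF _ k2]) (use k3 in simp_all)
      qed
      also have "\<dots> = \<phi> r * (1 + v r)" by (simp add: \<phi>_def)
      finally show "cmod (exp (- \<i> * complex_of_real t * z) * F r) \<le> \<phi> r * (1 + v r)" .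
    qed
    then show ?thesis using yt by (simp add: v_def)
  qed
  have "v x \<le> exp (integral {x..} \<phi>) - 1"
    by (rule gronwall_tail[OF phi_nn phi_int v_nn v_cont v_bdd v_le])
  moreover have "integral {x..} \<phi> = c * integral {x..} (\<lambda>t. a t * cmod (q t))"
    by (simp add: \<phi>_def[abs_def])
  ultimately show ?thesis by (simp add: v_def y_def c_def)
qed

end
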